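(* Fix $\epsilon>0$ and define \[U_1:=\left\{(a,b)\in\bigl([0,1/2)\times[1/2,1)\bigr)\cup\bigl([1/2,1)\times[0,1/2)\bigr):\ a+b<\tfrac34\right\},\] \[U_2:=\left\{(a,b)\in[0,1/2)\times[0,1):\ \tfrac34+\epsilon<a+b<\tfrac54\right\},\] and $U:=U_1\cup U_2\subset\mathbb{R}^2$. Let $x,z\in U$ and let $y^*:=\frac{x+z}{2}$. Then $y^*\neq u+\xi$ for all $u\in U$ and all $\xi\in\{(1/2,1/2),(1/2,0),(0,1/2)\}$. *)

theory Defs
  imports Complex_Main
begin

definition U1 :: "(real \<times> real) set" where
  "U1 = {(a, b). ((0 \<le> a \<and> a < 1/2 \<and> 1/2 \<le> b \<and> b < 1) \<or> (1/2 \<le> a \<and> a < 1 \<and> 0 \<le> b \<and> b < 1/2))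
                 \<and> a + b < 3/4}"

definition U2 :: "real \<Rightarrow> (real \<times> real) set" where
  "U2 \<epsilon> = {(a, b). 0 \<le> a \<and> a < 1/2 \<and> 0 \<le> b \<and> b < 1 \<and> 3/4 + \<epsilon> < a + b \<and> a + b < 5/4}"

definition U :: "real \<Rightarrow> (real \<times> real) set" where
  "U \<epsilon> = U1 \<union> U2 \<epsilon>"

end

theory Submission
  imports Defs
begin

theorem lemma4p5:
  fixes \<epsilon> :: real and x z u \<xi> :: "real \<times> real"
  assumes "\<epsilon> > 0"
    and "x \<in> U \<epsilon>" and "z \<in> U \<epsilon>"
    and "u \<in> U \<epsilon>"
    and "\<xi> \<in> {(1/2, 1/2), (1/2, 0), (0, 1/2)}"
  shows "((fst x + fst z) / 2, (snd x + snd z) / 2) \<noteq> (fst u + fst \<xi>, snd u + snd \<xi>)"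
proof -
  obtain x1 x2 where X: "x = (x1, x2)" by fastforce
  obtain z1 z2 where Z: "z = (z1, z2)" by fastforce
  obtain u1 u2 where UU: "u = (u1, u2)" by fastforce
  show ?thesis
    using assms unfolding X Z UU U_def U1_def U2_def
    by auto
qed

end
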